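(* Let $\rho$ be a density operator on a $D$-dimensional Hilbert space with eigenvalues $\lambda_1,\dots,\lambda_D$ (with multiplicity), and let $0<\epsilon<1$. Let $x$ be the unique number $\ge\min_i\lambda_i$ with $\sum_i(x-\lambda_i)^+=\epsilon$ and $y$ the unique number with $\sum_i(\lambda_i-y)^+=\epsilon$, where $t^+=\max(t,0)$, and assume $x\le y$. Set $\mu_i=\min(\max(\lambda_i,x),y)$, i.e. eigenvalues below $x$ are raised to $x$, those above $y$ are lowered to $y$, and the others are unchanged. Then $$\inf_{\sigma\in\mathcal B^\epsilon(\rho)}\mathrm{tr}\,\sigma^2=\sum_{i=1}^D\mu_i^2,\qquad\text{so}\qquad S_2^\epsilon(\rho)=-\log_2\sum_{i=1}^D\mu_i^2 .$$ (In the paper this is applied to $\rho_{\vec XE}$, with $D=d^{3n}$ and the spectrum consisting of $0$ with multiplicity $d^{3n}-d^{2n}$ and $(\beta_0/d)^l(\beta_1/d)^{n-l}$ with multiplicity $d^n\binom nl(d-1)^{n-l}$, $0\le l\le n$.)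
   Context: Trace distance $\|\rho-\sigma\|=\frac12\mathrm{tr}|\rho-\sigma|$; $\mathcal B^\epsilon(\rho)$ is the set of density operators $\sigma$ on the same space with $\|\rho-\sigma\|\le\epsilon$. The $\epsilon$-smooth Rényi entropy of order $2$ is $S_2^\epsilon(\rho)=-\log_2\inf_{\sigma\in\mathcal B^\epsilon(\rho)}\mathrm{tr}\,\sigma^2$. *)

theory Defs
  imports Complex_Main "Jordan_Normal_Form.Char_Poly"
begin

definition adj_mat :: "complex mat \<Rightarrow> complex mat" where
  "adj_mat A = mat (dim_col A) (dim_row A) (\<lambda>(i,j). cnj (A $$ (j,i)))"

definition tr_mat :: "complex mat \<Rightarrow> complex" where
  "tr_mat A = (\<Sum>i<dim_row A. A $$ (i,i))"

definition hermitian_mat :: "complex mat \<Rightarrow> bool" where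
  "hermitian_mat A \<longleftrightarrow> adj_mat A = A"

definition psd_mat :: "nat \<Rightarrow> complex mat \<Rightarrow> bool" where
  "psd_mat n A \<longleftrightarrow> A \<in> carrier_mat n n \<and> hermitian_mat A \<and>
     (\<forall>v \<in> carrier_vec n. Im ((A *\<^sub>v v) \<bullet>c v) = 0 \<and> 0 \<le> Re ((A *\<^sub>v v) \<bullet>c v))"

definition density_op :: "nat \<Rightarrow> complex mat \<Rightarrow> bool" where
  "density_op D \<rho> \<longleftrightarrow> psd_mat D \<rho> \<and> tr_mat \<rho> = 1"

definition abs_mat :: "complex mat \<Rightarrow> complex mat" where
  "abs_mat A = (THE B. psd_mat (dim_col A) B \<and> B * B = adj_mat A * A)"

definition trace_dist :: "complex mat \<Rightarrow> complex mat \<Rightarrow> real" where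
  "trace_dist \<rho> \<sigma> = Re (tr_mat (abs_mat (\<rho> - \<sigma>))) / 2"

definition eps_ball :: "nat \<Rightarrow> real \<Rightarrow> complex mat \<Rightarrow> complex mat set" where
  "eps_ball D \<epsilon> \<rho> = {\<sigma>. density_op D \<sigma> \<and> trace_dist \<rho> \<sigma> \<le> \<epsilon>}"

definition smooth_renyi2 :: "nat \<Rightarrow> real \<Rightarrow> complex mat \<Rightarrow> real" where
  "smooth_renyi2 D \<epsilon> \<rho> = - log 2 (Inf ((\<lambda>\<sigma>. Re (tr_mat (\<sigma> * \<sigma>))) ` eps_ball D \<epsilon> \<rho>))"

definition pos_part :: "real \<Rightarrow> real" where
  "pos_part t = max t 0"

end

theory Submission
  imports Defs "Jordan_Normal_Form.Schur_Decomposition"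
begin


lemma fm_assoc: assumes "A \<in> carrier_mat n n" "B \<in> carrier_mat n n" "C \<in> carrier_mat n n"
  shows "A * B * C = A * (B * C)"
  using assoc_mult_mat[OF assms] .

lemma sq_mult: "A \<in> carrier_mat n n \<Longrightarrow> B \<in> carrier_mat n n \<Longrightarrow> A * B \<in> carrier_mat n n"
  by (rule mult_carrier_mat)

lemma sq_assoc_vec: "A \<in> carrier_mat n n \<Longrightarrow> B \<in> carrier_mat n n \<Longrightarrow> v \<in> carrier_vec n \<Longrightarrow>
  (A * B) *\<^sub>v v = A *\<^sub>v (B *\<^sub>v v)"
  by (rule assoc_mult_mat_vec)

lemma sq_mv: "A \<in> carrier_mat n n \<Longrightarrow> v \<in> carrier_vec n \<Longrightarrow> A *\<^sub>v v \<in> carrier_vec n"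
  by (rule mult_mat_vec_carrier)

lemma mult_entry: "i < dim_row A \<Longrightarrow> j < dim_col B \<Longrightarrow> dim_col A = dim_row B \<Longrightarrow>
  (A * B) $$ (i,j) = (\<Sum>k<dim_row B. A $$ (i,k) * B $$ (k,j))"
  by (simp add: scalar_prod_def atLeast0LessThan)

lemma adj_dims[simp]: "dim_row (adj_mat A) = dim_col A" "dim_col (adj_mat A) = dim_row A"
  by (auto simp: adj_mat_def)

lemma adj_index[simp]: "i < dim_col A \<Longrightarrow> j < dim_row A \<Longrightarrow> adj_mat A $$ (i,j) = cnj (A $$ (j,i))"
  unfolding adj_mat_def by simp

lemma adj_carrier[simp]: "A \<in> carrier_mat n m \<Longrightarrow> adj_mat A \<in> carrier_mat m n"
  unfolding carrier_mat_def by simp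

lemma adj_adj[simp]: "adj_mat (adj_mat A) = A"
  by (rule eq_matI, auto)

lemma adj_mult: assumes "A \<in> carrier_mat n m" "B \<in> carrier_mat m k"
  shows "adj_mat (A * B) = adj_mat B * adj_mat A"
proof (intro eq_matI)
  fix i j assume "i < dim_row (adj_mat B * adj_mat A)" "j < dim_col (adj_mat B * adj_mat A)"
  then have ij: "i < k" "j < n" using assms by auto
  have "adj_mat (A * B) $$ (i,j) = cnj (\<Sum>l<m. A $$ (j,l) * B $$ (l,i))"
    using ij assms by (simp add: mult_entry del: index_mult_mat(1))
  also have "\<dots> = (\<Sum>l<m. adj_mat B $$ (i,l) * adj_mat A $$ (l,j))"
    using ij assms by (simp add: mult.commute)
  also have "\<dots> = (adj_mat B * adj_mat A) $$ (i,j)"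
    using ij assms by (simp add: mult_entry del: index_mult_mat(1))
  finally show "adj_mat (A * B) $$ (i,j) = (adj_mat B * adj_mat A) $$ (i,j)" .
qed (use assms in auto)

lemma adj_add: assumes "A \<in> carrier_mat n m" "B \<in> carrier_mat n m"
  shows "adj_mat (A + B) = adj_mat A + adj_mat B"
proof (rule eq_matI)
  fix i j assume "i < dim_row (adj_mat A + adj_mat B)" "j < dim_col (adj_mat A + adj_mat B)"
  with assms have ij: "i < m" "j < n" by auto
  then show "adj_mat (A + B) $$ (i,j) = (adj_mat A + adj_mat B) $$ (i,j)" using assms by simp
qed (use assms in simp)+

lemma adj_minus: assumes "A \<in> carrier_mat n m" "B \<in> carrier_mat n m"
  shows "adj_mat (A - B) = adj_mat A - adj_mat B"
proof (rule eq_matI)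
  fix i j assume "i < dim_row (adj_mat A - adj_mat B)" "j < dim_col (adj_mat A - adj_mat B)"
  with assms have ij: "i < m" "j < n" by auto
  then show "adj_mat (A - B) $$ (i,j) = (adj_mat A - adj_mat B) $$ (i,j)" using assms by simp
qed (use assms in simp)+

lemma adj_one[simp]: "adj_mat (1\<^sub>m n) = 1\<^sub>m n"
  unfolding adj_mat_def by (rule eq_matI) auto

lemma tr_add: assumes "A \<in> carrier_mat n n" "B \<in> carrier_mat n n"
  shows "tr_mat (A + B) = tr_mat A + tr_mat B"
  using assms by (auto simp: tr_mat_def sum.distrib)

lemma tr_minus: assumes "A \<in> carrier_mat n n" "B \<in> carrier_mat n n"
  shows "tr_mat (A - B) = tr_mat A - tr_mat B"
proof -
  have "tr_mat (A - B) = (\<Sum>i<n. A $$ (i,i) - B $$ (i,i))"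
    unfolding tr_mat_def using assms by (intro sum.cong) auto
  also have "\<dots> = tr_mat A - tr_mat B" unfolding tr_mat_def sum_subtractf using assms by simp
  finally show ?thesis .
qed

lemma tr_mult: assumes "A \<in> carrier_mat n m" "B \<in> carrier_mat m n"
  shows "tr_mat (A * B) = (\<Sum>i<n. \<Sum>k<m. A $$ (i,k) * B $$ (k,i))"
  using assms by (auto simp: tr_mat_def mult_entry simp del: index_mult_mat(1))

lemma tr_mult_comm: assumes "A \<in> carrier_mat n m" "B \<in> carrier_mat m n"
  shows "tr_mat (A * B) = tr_mat (B * A)"
proof -
  have "tr_mat (A * B) = (\<Sum>i<n. \<Sum>k<m. B $$ (k,i) * A $$ (i,k))" by (simp add: tr_mult[OF assms] mult.commute)
  also have "\<dots> = (\<Sum>k<m. \<Sum>i<n. B $$ (k,i) * A $$ (i,k))" by (rule sum.swap)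
  also have "\<dots> = tr_mat (B * A)" by (simp add: tr_mult[OF assms(2,1)])
  finally show ?thesis .
qed

definition unitary :: "nat \<Rightarrow> complex mat \<Rightarrow> bool" where
  "unitary n U \<longleftrightarrow> U \<in> carrier_mat n n \<and> adj_mat U * U = 1\<^sub>m n"

lemma unitary_right: "unitary n U \<Longrightarrow> U * adj_mat U = 1\<^sub>m n"
  unfolding unitary_def using mat_mult_left_right_inverse[of "adj_mat U" n U] by auto

lemma unitary_carrier: "unitary n U \<Longrightarrow> U \<in> carrier_mat n n"
  unfolding unitary_def by auto

lemma unitary_mult: assumes "unitary n U" "unitary n V" shows "unitary n (U * V)"
proof -
  have U: "U \<in> carrier_mat n n" and V: "V \<in> carrier_mat n n" using assms unitary_def by auto
  have aU: "adj_mat U \<in> carrier_mat n n" and aV: "adj_mat V \<in> carrier_mat n n" using U V by auto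
  have "adj_mat (U * V) * (U * V) = adj_mat V * adj_mat U * (U * V)" by (simp add: adj_mult[OF U V])
  also have "\<dots> = adj_mat V * (adj_mat U * (U * V))" using aU aV U V by (meson assoc_mult_mat mult_carrier_mat)
  also have "adj_mat U * (U * V) = adj_mat U * U * V" using aU U V by (simp add: fm_assoc[of _ n] sq_mult[of _ n] del: assoc_mult_mat)
  also have "\<dots> = V" using assms(1) V unfolding unitary_def by simp
  also have "adj_mat V * V = 1\<^sub>m n" using assms(2) unfolding unitary_def by simp
  finally show ?thesis using U V unfolding unitary_def by auto
qed

definition dgc :: "nat \<Rightarrow> (nat \<Rightarrow> complex) \<Rightarrow> complex mat" where
  "dgc n f = mat n n (\<lambda>(i,j). if i = j then f i else 0)"

lemma dgc_carrier[simp]: "dgc n f \<in> carrier_mat n n" "dim_row (dgc n f) = n" "dim_col (dgc n f) = n"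
  by (auto simp: dgc_def)

lemma dgc_index[simp]: "i < n \<Longrightarrow> j < n \<Longrightarrow> dgc n f $$ (i,j) = (if i = j then f i else 0)"
  by (auto simp: dgc_def)

lemma adj_dgc: "adj_mat (dgc n f) = dgc n (\<lambda>i. cnj (f i))"
  by (intro eq_matI) auto

lemma dgc_mult: "dgc n f * dgc n g = dgc n (\<lambda>i. f i * g i)"
proof (intro eq_matI)
  fix i j assume "i < dim_row (dgc n (\<lambda>i. f i * g i))" "j < dim_col (dgc n (\<lambda>i. f i * g i))"
  then have ij: "i < n" "j < n" by auto
  have "(dgc n f * dgc n g) $$ (i,j) = (\<Sum>k<n. dgc n f $$ (i,k) * dgc n g $$ (k,j))"
    using ij by (simp add: mult_entry del: index_mult_mat(1))
  also have "\<dots> = (\<Sum>k\<in>{i}. dgc n f $$ (i,k) * dgc n g $$ (k,j))"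
    using ij by (intro sum.mono_neutral_right) auto
  finally show "(dgc n f * dgc n g) $$ (i,j) = dgc n (\<lambda>i. f i * g i) $$ (i,j)" using ij by simp
qed auto


lemma mv_entry: "i < dim_row A \<Longrightarrow> dim_col A = dim_vec v \<Longrightarrow> (A *\<^sub>v v) $ i = (\<Sum>j<dim_vec v. A $$ (i,j) * v $ j)"
  by (simp add: scalar_prod_def atLeast0LessThan)

lemma cip: "v \<bullet>c w = (\<Sum>i<dim_vec w. v $ i * cnj (w $ i))"
  by (simp add: scalar_prod_def atLeast0LessThan)

lemma adj_ip: assumes A: "A \<in> carrier_mat n m" and x: "x \<in> carrier_vec m" and w: "w \<in> carrier_vec n"
  shows "(A *\<^sub>v x) \<bullet>c w = x \<bullet>c (adj_mat A *\<^sub>v w)"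
proof -
  have "(A *\<^sub>v x) \<bullet>c w = (\<Sum>i<n. (\<Sum>j<m. A $$ (i,j) * x $ j) * cnj (w $ i))"
    using A x w by (simp add: cip mv_entry del: index_mult_mat_vec)
  also have "\<dots> = (\<Sum>i<n. \<Sum>j<m. x $ j * (A $$ (i,j) * cnj (w $ i)))"
    by (simp add: sum_distrib_right sum_distrib_left mult_ac)
  also have "\<dots> = (\<Sum>j<m. \<Sum>i<n. x $ j * (A $$ (i,j) * cnj (w $ i)))" by (rule sum.swap)
  also have "\<dots> = (\<Sum>j<m. x $ j * cnj (\<Sum>i<n. adj_mat A $$ (j,i) * w $ i))"
    using A by (simp add: sum_distrib_left)
  also have "\<dots> = x \<bullet>c (adj_mat A *\<^sub>v w)"
    using A x w by (simp add: cip mv_entry del: index_mult_mat_vec)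
  finally show ?thesis .
qed

lemma qf_dgc: assumes w: "w \<in> carrier_vec n"
  shows "(dgc n f *\<^sub>v w) \<bullet>c w = (\<Sum>i<n. f i * (w $ i * cnj (w $ i)))"
proof -
  have "(dgc n f *\<^sub>v w) \<bullet>c w = (\<Sum>i<n. (\<Sum>j<n. dgc n f $$ (i,j) * w $ j) * cnj (w $ i))"
    using w by (simp add: cip mv_entry del: index_mult_mat_vec)
  also have "\<dots> = (\<Sum>i<n. (\<Sum>j\<in>{i}. dgc n f $$ (i,j) * w $ j) * cnj (w $ i))"
    by (intro sum.cong refl arg_cong2[where f="(*)"] sum.mono_neutral_right) auto
  finally show ?thesis by (simp add: mult.assoc)
qed

lemma sq_nonneg_c: "0 \<le> Re (z * cnj z) \<and> Im (z * cnj z) = 0"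
  by (simp add: complex_mult_cnj)



lemma fm_mult: assumes U: "unitary n U"
  shows "(U * dgc n f * adj_mat U) * (U * dgc n g * adj_mat U) = U * dgc n (\<lambda>i. f i * g i) * adj_mat U"
proof -
  have Uc: "U \<in> carrier_mat n n" and aU: "adj_mat U \<in> carrier_mat n n" using U unitary_def by auto
  have F: "dgc n f \<in> carrier_mat n n" "dgc n g \<in> carrier_mat n n" by auto
  have "(U * dgc n f * adj_mat U) * (U * dgc n g * adj_mat U)
      = U * dgc n f * (adj_mat U * (U * dgc n g * adj_mat U))"
    using Uc aU F by (intro fm_assoc) auto
  also have "adj_mat U * (U * dgc n g * adj_mat U) = (adj_mat U * U) * dgc n g * adj_mat U"
    using Uc aU F by (simp add: fm_assoc[of _ n] sq_mult[of _ n] del: assoc_mult_mat)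
  also have "\<dots> = dgc n g * adj_mat U" using U aU unfolding unitary_def by simp
  also have "U * dgc n f * (dgc n g * adj_mat U) = U * (dgc n f * dgc n g) * adj_mat U"
    using Uc aU F by (simp add: fm_assoc[of _ n] sq_mult[of _ n] del: assoc_mult_mat)
  finally show ?thesis by (simp add: dgc_mult)
qed

lemma dgc_minus: "dgc n f - dgc n g = dgc n (\<lambda>i. f i - g i)"
  by (rule eq_matI) simp_all

lemma dgc_add: "dgc n f + dgc n g = dgc n (\<lambda>i. f i + g i)"
  by (rule eq_matI) simp_all

lemma fm_minus: assumes U: "unitary n U"
  shows "U * dgc n f * adj_mat U - U * dgc n g * adj_mat U = U * dgc n (\<lambda>i. f i - g i) * adj_mat U"
proof -
  have Uc: "U \<in> carrier_mat n n" and aU: "adj_mat U \<in> carrier_mat n n" using U unitary_def by auto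
  have F: "dgc n f \<in> carrier_mat n n" "dgc n g \<in> carrier_mat n n" by auto
  have "U * dgc n f * adj_mat U - U * dgc n g * adj_mat U = (U * dgc n f - U * dgc n g) * adj_mat U"
    using Uc aU F by (subst minus_mult_distrib_mat[where nr=n and n=n and nc=n]) (simp_all add: sq_mult[of _ n])
  also have "U * dgc n f - U * dgc n g = U * (dgc n f - dgc n g)"
    using Uc F by (subst mult_minus_distrib_mat[where nr=n and n=n and nc=n]) simp_all
  finally show ?thesis by (simp add: dgc_minus)
qed

lemma tr_dgc: "tr_mat (dgc n f) = (\<Sum>i<n. f i)"
  by (simp add: tr_mat_def)

lemma tr_fm: assumes U: "unitary n U"
  shows "tr_mat (U * dgc n f * adj_mat U) = (\<Sum>i<n. f i)"
proof -
  have Uc: "U \<in> carrier_mat n n" and aU: "adj_mat U \<in> carrier_mat n n" using U unitary_def by auto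
  have "tr_mat (U * dgc n f * adj_mat U) = tr_mat (adj_mat U * (U * dgc n f))"
    using Uc aU by (intro tr_mult_comm) auto
  also have "adj_mat U * (U * dgc n f) = adj_mat U * U * dgc n f"
    using Uc aU by (simp add: fm_assoc[of _ n] sq_mult[of _ n] del: assoc_mult_mat)
  also have "\<dots> = dgc n f" using U unfolding unitary_def by simp
  finally show ?thesis by (simp add: tr_dgc)
qed

lemma adj_fm: assumes U: "unitary n U"
  shows "adj_mat (U * dgc n f * adj_mat U) = U * dgc n (\<lambda>i. cnj (f i)) * adj_mat U"
proof -
  have Uc: "U \<in> carrier_mat n n" and aU: "adj_mat U \<in> carrier_mat n n" using U unitary_def by auto
  have "adj_mat (U * dgc n f * adj_mat U) = adj_mat (adj_mat U) * adj_mat (U * dgc n f)"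
    using Uc aU by (intro adj_mult) auto
  also have "adj_mat (U * dgc n f) = adj_mat (dgc n f) * adj_mat U"
    using Uc by (intro adj_mult) auto
  finally show ?thesis using Uc aU by (simp add: adj_dgc fm_assoc[of _ n] sq_mult[of _ n] del: assoc_mult_mat)
qed

lemma herm_fm: assumes U: "unitary n U"
  shows "hermitian_mat (U * dgc n (\<lambda>i. complex_of_real (f i)) * adj_mat U)"
  unfolding hermitian_mat_def adj_fm[OF U] by simp

lemma psd_fm: assumes U: "unitary n U" and f: "\<And>i. i < n \<Longrightarrow> 0 \<le> f i"
  shows "psd_mat n (U * dgc n (\<lambda>i. complex_of_real (f i)) * adj_mat U)"
proof -
  have Uc: "U \<in> carrier_mat n n" and aU: "adj_mat U \<in> carrier_mat n n" using U unitary_def by auto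
  let ?D = "dgc n (\<lambda>i. complex_of_real (f i))"
  have D: "?D \<in> carrier_mat n n" by simp
  { fix v :: "complex vec" assume v: "v \<in> carrier_vec n"
    let ?w = "adj_mat U *\<^sub>v v"
    have w: "?w \<in> carrier_vec n" using aU v by simp
    have "((U * ?D * adj_mat U) *\<^sub>v v) \<bullet>c v = (U *\<^sub>v (?D *\<^sub>v ?w)) \<bullet>c v"
      using Uc aU D v by (simp add: sq_assoc_vec[of _ n] sq_mult[of _ n] sq_mv[of _ n] del: assoc_mult_mat_vec)
    also have "\<dots> = (?D *\<^sub>v ?w) \<bullet>c ?w" using Uc D w v sq_mv[OF D w] by (intro adj_ip) auto
    also have "\<dots> = (\<Sum>i<n. complex_of_real (f i) * (?w $ i * cnj (?w $ i)))" using w by (rule qf_dgc)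
    finally have eq: "((U * ?D * adj_mat U) *\<^sub>v v) \<bullet>c v = (\<Sum>i<n. complex_of_real (f i) * (?w $ i * cnj (?w $ i)))" .
    have "Im (\<Sum>i<n. complex_of_real (f i) * (?w $ i * cnj (?w $ i))) = 0"
      by (simp add: Im_sum sq_nonneg_c)
    moreover have "0 \<le> Re (\<Sum>i<n. complex_of_real (f i) * (?w $ i * cnj (?w $ i)))"
      unfolding Re_sum by (intro sum_nonneg) (simp add: f sq_nonneg_c)
    ultimately have "Im (((U * ?D * adj_mat U) *\<^sub>v v) \<bullet>c v) = 0 \<and> 0 \<le> Re (((U * ?D * adj_mat U) *\<^sub>v v) \<bullet>c v)"
      unfolding eq by simp
  }
  then show ?thesis unfolding psd_mat_def using herm_fm[OF U] Uc aU by auto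
qed



lemma quad_zero: fixes a b :: real
  assumes a: "a \<ge> 0" and b: "b \<ge> 0" and q: "\<And>t. 0 \<le> 2 * t * a + t^2 * b"
  shows "a = 0"
proof (rule ccontr)
  assume "a \<noteq> 0" then have a0: "a > 0" using a by simp
  define t where "t = - a / (b + 1)"
  have b1: "b + 1 > 0" using b by simp
  have tb: "t * (b + 1) = - a" unfolding t_def using b1 by simp
  have "(b + 1)^2 * (2 * t * a + t^2 * b) = 2 * a * (b + 1) * (t * (b + 1)) + b * (t * (b + 1))^2"
    by (simp add: algebra_simps power2_eq_square)
  also have "\<dots> = - (a^2 * (b + 2))" unfolding tb by (simp add: algebra_simps power2_eq_square)
  also have "\<dots> < 0" using a0 b by (simp add: mult_pos_pos)
  finally have "(b + 1)^2 * (2 * t * a + t^2 * b) < 0" .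
  moreover have "(b + 1)^2 * (2 * t * a + t^2 * b) \<ge> 0" using q[of t] by simp
  ultimately show False by simp
qed

lemma qf_expand: assumes B: "B \<in> carrier_mat n n" and c: "c \<in> carrier_vec n" and w: "w \<in> carrier_vec n"
  shows "(B *\<^sub>v (c + complex_of_real t \<cdot>\<^sub>v w)) \<bullet>c (c + complex_of_real t \<cdot>\<^sub>v w)
    = (B *\<^sub>v c) \<bullet>c c + complex_of_real t * ((B *\<^sub>v c) \<bullet>c w) + complex_of_real t * ((B *\<^sub>v w) \<bullet>c c)
      + (complex_of_real t)^2 * ((B *\<^sub>v w) \<bullet>c w)"
proof -
  let ?t = "complex_of_real t"
  have L: "(B *\<^sub>v (c + ?t \<cdot>\<^sub>v w)) \<bullet>c (c + ?t \<cdot>\<^sub>v w)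
     = (\<Sum>i<n. (\<Sum>j<n. B $$ (i,j) * (c $ j + ?t * w $ j)) * (cnj (c $ i) + ?t * cnj (w $ i)))"
    using B c w by (simp add: cip mv_entry del: index_mult_mat_vec)
  have R: "(B *\<^sub>v c) \<bullet>c c + ?t * ((B *\<^sub>v c) \<bullet>c w) + ?t * ((B *\<^sub>v w) \<bullet>c c) + ?t^2 * ((B *\<^sub>v w) \<bullet>c w)
     = (\<Sum>i<n. (\<Sum>j<n. B $$ (i,j) * c $ j) * cnj (c $ i)) + ?t * (\<Sum>i<n. (\<Sum>j<n. B $$ (i,j) * c $ j) * cnj (w $ i))
       + ?t * (\<Sum>i<n. (\<Sum>j<n. B $$ (i,j) * w $ j) * cnj (c $ i)) + ?t^2 * (\<Sum>i<n. (\<Sum>j<n. B $$ (i,j) * w $ j) * cnj (w $ i))"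
    using B c w by (simp add: cip mv_entry del: index_mult_mat_vec)
  have pt: "(\<Sum>j<n. B $$ (i,j) * (c $ j + ?t * w $ j)) * (cnj (c $ i) + ?t * cnj (w $ i))
     = (\<Sum>j<n. B $$ (i,j) * c $ j) * cnj (c $ i) + ?t * ((\<Sum>j<n. B $$ (i,j) * c $ j) * cnj (w $ i))
       + ?t * ((\<Sum>j<n. B $$ (i,j) * w $ j) * cnj (c $ i)) + ?t^2 * ((\<Sum>j<n. B $$ (i,j) * w $ j) * cnj (w $ i))" for i
  proof -
    have "(\<Sum>j<n. B $$ (i,j) * (c $ j + ?t * w $ j)) = (\<Sum>j<n. B $$ (i,j) * c $ j) + ?t * (\<Sum>j<n. B $$ (i,j) * w $ j)"
      by (simp add: distrib_left sum.distrib sum_distrib_left mult.left_commute)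
    then show ?thesis by (simp add: algebra_simps power2_eq_square)
  qed
  show ?thesis unfolding L R pt sum.distrib sum_distrib_left[symmetric] ..
qed

lemma psd_herm: "psd_mat n B \<Longrightarrow> adj_mat B = B"
  unfolding psd_mat_def hermitian_mat_def by simp

lemma psd_carrier: "psd_mat n B \<Longrightarrow> B \<in> carrier_mat n n"
  unfolding psd_mat_def by simp

lemma psd_qf: "psd_mat n B \<Longrightarrow> v \<in> carrier_vec n \<Longrightarrow> Im ((B *\<^sub>v v) \<bullet>c v) = 0 \<and> 0 \<le> Re ((B *\<^sub>v v) \<bullet>c v)"
  unfolding psd_mat_def by simp

lemma cip_self: "Im (v \<bullet>c v) = 0 \<and> 0 \<le> Re (v \<bullet>c v)"
  using conjugate_square_ge_0_vec[of v] by (simp add: less_eq_complex_def)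

lemma psd_kernel: assumes P: "psd_mat n B" and c: "c \<in> carrier_vec n" and z: "(B *\<^sub>v c) \<bullet>c c = 0"
  shows "B *\<^sub>v c = 0\<^sub>v n"
proof -
  have Bc: "B \<in> carrier_mat n n" using P psd_carrier by auto
  define w where "w = B *\<^sub>v c"
  have w: "w \<in> carrier_vec n" unfolding w_def using Bc c by simp
  have Bw: "B *\<^sub>v w \<in> carrier_vec n" using Bc w by simp
  have e2: "(B *\<^sub>v w) \<bullet>c c = w \<bullet>c w"
  proof -
    have "(B *\<^sub>v w) \<bullet>c c = w \<bullet>c (adj_mat B *\<^sub>v c)" using Bc w c by (rule adj_ip)
    then show ?thesis using psd_herm[OF P] by (simp add: w_def)
  qed
  define a where "a = Re (w \<bullet>c w)"
  define b where "b = Re ((B *\<^sub>v w) \<bullet>c w)"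
  have a0: "a \<ge> 0" unfolding a_def using cip_self by auto
  have b0: "b \<ge> 0" unfolding b_def using psd_qf[OF P w] by auto
  have "0 \<le> 2 * t * a + t^2 * b" for t
  proof -
    let ?z = "c + complex_of_real t \<cdot>\<^sub>v w"
    have zc: "?z \<in> carrier_vec n" using c w by simp
    have "0 \<le> Re ((B *\<^sub>v ?z) \<bullet>c ?z)" using psd_qf[OF P zc] by simp
    also have "(B *\<^sub>v ?z) \<bullet>c ?z = complex_of_real t * (w \<bullet>c w) + complex_of_real t * (w \<bullet>c w)
      + (complex_of_real t)^2 * ((B *\<^sub>v w) \<bullet>c w)"
      using qf_expand[OF Bc c w, of t] z e2 by (simp add: w_def)
    also have "Re \<dots> = 2 * t * a + t^2 * b" unfolding a_def b_def
      by (simp add: power2_eq_square)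
    finally show ?thesis .
  qed
  then have "a = 0" using quad_zero[OF a0 b0] by blast
  then have "w \<bullet>c w = 0" using cip_self[of w] unfolding a_def by (simp add: complex_eq_iff)
  then show ?thesis using w unfolding w_def by simp
qed


lemma herm_entry: assumes "adj_mat D = D" "D \<in> carrier_mat n n" "i < n" "k < n"
  shows "D $$ (i,k) = cnj (D $$ (k,i))"
proof -
  have "D $$ (i,k) = adj_mat D $$ (i,k)" using assms(1) by simp
  also have "\<dots> = cnj (D $$ (k,i))" using assms(2-4) adj_index[of i D k] by (simp add: carrier_matD)
  finally show ?thesis .
qed

lemma trq: assumes D: "D \<in> carrier_mat n n" and h: "adj_mat D = D" and B: "B \<in> carrier_mat n n"
  shows "tr_mat (D * (B * D)) = (\<Sum>i<n. (B *\<^sub>v col D i) \<bullet>c col D i)"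
proof -
  have "tr_mat (D * (B * D)) = (\<Sum>i<n. \<Sum>k<n. D $$ (i,k) * (B * D) $$ (k,i))"
    using D B by (intro tr_mult) auto
  also have "\<dots> = (\<Sum>i<n. (B *\<^sub>v col D i) \<bullet>c col D i)"
  proof (rule sum.cong[OF refl])
    fix i assume i: "i \<in> {..<n}"
    have "(B *\<^sub>v col D i) \<bullet>c col D i = (\<Sum>k<n. (B *\<^sub>v col D i) $ k * cnj (col D i $ k))"
      using D by (simp add: cip)
    also have "\<dots> = (\<Sum>k<n. D $$ (i,k) * (B * D) $$ (k,i))"
    proof (rule sum.cong[OF refl])
      fix k assume k: "k \<in> {..<n}"
      have "(B *\<^sub>v col D i) $ k = (\<Sum>j<n. B $$ (k,j) * col D i $ j)"
        using B D k by (simp add: mv_entry del: index_mult_mat_vec)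
      also have "\<dots> = (B * D) $$ (k,i)"
        using B D k i by (simp add: mult_entry del: index_mult_mat(1))
      finally show "(B *\<^sub>v col D i) $ k * cnj (col D i $ k) = D $$ (i,k) * (B * D) $$ (k,i)"
        using herm_entry[OF h D, of i k] i k D by simp
    qed
    finally show "(\<Sum>k<n. D $$ (i,k) * (B * D) $$ (k,i)) = (B *\<^sub>v col D i) \<bullet>c col D i" by simp
  qed
  finally show ?thesis .
qed

lemma sqrt_unique: assumes P1: "psd_mat n B1" and P2: "psd_mat n B2" and sq: "B1 * B1 = B2 * B2"
  shows "B1 = B2"
proof -
  have b1: "B1 \<in> carrier_mat n n" and b2: "B2 \<in> carrier_mat n n" using P1 P2 psd_carrier by auto
  define D where "D = B1 - B2"
  have Dc: "D \<in> carrier_mat n n" unfolding D_def using b2 by (rule minus_carrier_mat)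
  have hD: "adj_mat D = D" unfolding D_def using adj_minus[OF b1 b2] psd_herm[OF P1] psd_herm[OF P2] by simp
  have key: "B1 * D + D * B2 = 0\<^sub>m n n"
  proof (rule eq_matI)
    fix i j assume "i < dim_row (0\<^sub>m n n :: complex mat)" "j < dim_col (0\<^sub>m n n :: complex mat)"
    then have ij: "i < n" "j < n" by auto
    have "(B1 * D + D * B2) $$ (i,j) = (B1 * D) $$ (i,j) + (D * B2) $$ (i,j)"
      using ij b1 b2 Dc by simp
    also have "\<dots> = (\<Sum>k<n. B1 $$ (i,k) * (B1 $$ (k,j) - B2 $$ (k,j))) + (\<Sum>k<n. (B1 $$ (i,k) - B2 $$ (i,k)) * B2 $$ (k,j))"
      using ij b1 b2 Dc by (simp add: mult_entry D_def del: index_mult_mat(1))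
    also have "\<dots> = (\<Sum>k<n. B1 $$ (i,k) * B1 $$ (k,j)) - (\<Sum>k<n. B2 $$ (i,k) * B2 $$ (k,j))"
      by (simp add: algebra_simps sum_subtractf sum.distrib)
    also have "\<dots> = (B1 * B1) $$ (i,j) - (B2 * B2) $$ (i,j)"
      using ij b1 b2 by (simp add: mult_entry del: index_mult_mat(1))
    also have "\<dots> = 0" using sq by simp
    finally show "(B1 * D + D * B2) $$ (i,j) = 0\<^sub>m n n $$ (i,j)" using ij by simp
  qed (use b1 b2 Dc in simp_all)
  have "tr_mat (D * (B1 * D)) + tr_mat (D * (D * B2)) = tr_mat (D * (B1 * D) + D * (D * B2))"
    using Dc b1 b2 by (intro tr_add[of _ n, symmetric]) (simp_all add: sq_mult[of _ n])
  also have "D * (B1 * D) + D * (D * B2) = D * (B1 * D + D * B2)"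
    using Dc b1 b2 by (intro mult_add_distrib_mat[where nr=n and n=n and nc=n, symmetric]) (simp_all add: sq_mult[of _ n])
  also have "\<dots> = 0\<^sub>m n n" unfolding key using Dc by simp
  finally have s0: "tr_mat (D * (B1 * D)) + tr_mat (D * (D * B2)) = 0" by (simp add: tr_mat_def)
  have "tr_mat (D * (D * B2)) = tr_mat ((D * B2) * D)"
    using Dc b2 by (intro tr_mult_comm[of _ n n]) (simp_all add: sq_mult[of _ n])
  also have "(D * B2) * D = D * (B2 * D)" using fm_assoc[OF Dc b2 Dc] .
  finally have "tr_mat (D * (B1 * D)) + tr_mat (D * (B2 * D)) = 0" using s0 by simp
  then have s: "(\<Sum>i<n. (B1 *\<^sub>v col D i) \<bullet>c col D i + (B2 *\<^sub>v col D i) \<bullet>c col D i) = 0"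
    unfolding trq[OF Dc hD b1] trq[OF Dc hD b2] sum.distrib .
  have colc: "col D i \<in> carrier_vec n" for i using col_dim[of D i] carrier_matD(1)[OF Dc] by simp
  have nn: "\<And>i. 0 \<le> Re ((B1 *\<^sub>v col D i) \<bullet>c col D i) + Re ((B2 *\<^sub>v col D i) \<bullet>c col D i)"
    using psd_qf[OF P1 colc] psd_qf[OF P2 colc] by (simp add: add_nonneg_nonneg)
  have "(\<Sum>i<n. Re ((B1 *\<^sub>v col D i) \<bullet>c col D i) + Re ((B2 *\<^sub>v col D i) \<bullet>c col D i)) = 0"
    using arg_cong[OF s, of Re] by (simp only: Re_sum plus_complex.sel zero_complex.sel)
  then have z: "\<And>i. i < n \<Longrightarrow> Re ((B1 *\<^sub>v col D i) \<bullet>c col D i) + Re ((B2 *\<^sub>v col D i) \<bullet>c col D i) = 0"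
    using sum_nonneg_eq_0_iff[of "{..<n}" "\<lambda>i. Re ((B1 *\<^sub>v col D i) \<bullet>c col D i) + Re ((B2 *\<^sub>v col D i) \<bullet>c col D i)"] nn by simp
  have z1: "(B1 *\<^sub>v col D i) \<bullet>c col D i = 0" and z2: "(B2 *\<^sub>v col D i) \<bullet>c col D i = 0" if i: "i < n" for i
  proof -
    have "Re ((B1 *\<^sub>v col D i) \<bullet>c col D i) = 0" "Re ((B2 *\<^sub>v col D i) \<bullet>c col D i) = 0"
      using z[OF i] psd_qf[OF P1 colc, of i] psd_qf[OF P2 colc, of i] by linarith+
    then show "(B1 *\<^sub>v col D i) \<bullet>c col D i = 0" "(B2 *\<^sub>v col D i) \<bullet>c col D i = 0"
      using psd_qf[OF P1 colc, of i] psd_qf[OF P2 colc, of i] by (simp_all add: complex_eq_iff)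
  qed
  have c0: "col D i = 0\<^sub>v n" if i: "i < n" for i
  proof -
    have k1: "B1 *\<^sub>v col D i = 0\<^sub>v n" by (rule psd_kernel[OF P1 colc z1[OF i]])
    have k2: "B2 *\<^sub>v col D i = 0\<^sub>v n" by (rule psd_kernel[OF P2 colc z2[OF i]])
    have "(B1 - B2) *\<^sub>v col D i = B1 *\<^sub>v col D i - B2 *\<^sub>v col D i"
      using b1 b2 colc by (rule minus_mult_distrib_mat_vec)
    then have "D *\<^sub>v col D i = B1 *\<^sub>v col D i - B2 *\<^sub>v col D i" by (simp only: D_def[symmetric])
    also have "\<dots> = 0\<^sub>v n" unfolding k1 k2 by simp
    finally have dz: "D *\<^sub>v col D i = 0\<^sub>v n" .
    have "col D i \<bullet>c col D i = (\<Sum>k<n. D $$ (k,i) * cnj (D $$ (k,i)))"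
      using Dc i by (simp add: cip)
    also have "\<dots> = (\<Sum>k<n. D $$ (i,k) * col D i $ k)"
      using Dc i by (intro sum.cong refl) (simp add: herm_entry[OF hD Dc, of i] mult.commute)
    also have "\<dots> = (D *\<^sub>v col D i) $ i"
      using Dc i by (simp add: mv_entry del: index_mult_mat_vec)
    also have "\<dots> = 0" unfolding dz using i by simp
    finally show ?thesis using colc[of i] by simp
  qed
  show ?thesis
  proof (rule eq_matI)
    fix k i assume "k < dim_row B2" "i < dim_col B2"
    then have ki: "k < n" "i < n" using b2 by auto
    have "D $$ (k,i) = col D i $ k" using Dc ki by simp
    also have "\<dots> = 0" using c0[OF ki(2)] ki by simp
    finally show "B1 $$ (k,i) = B2 $$ (k,i)" unfolding D_def using ki b1 b2 by simp
  qed (use b1 b2 in simp_all)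
qed

lemma abs_fm: assumes U: "unitary n U"
  shows "abs_mat (U * dgc n (\<lambda>i. complex_of_real (f i)) * adj_mat U) = U * dgc n (\<lambda>i. complex_of_real \<bar>f i\<bar>) * adj_mat U"
proof -
  let ?E = "U * dgc n (\<lambda>i. complex_of_real (f i)) * adj_mat U"
  let ?C = "U * dgc n (\<lambda>i. complex_of_real \<bar>f i\<bar>) * adj_mat U"
  have Uc: "U \<in> carrier_mat n n" using U unitary_def by auto
  have dc: "dim_col ?E = n" using Uc by simp
  have PC: "psd_mat n ?C" by (rule psd_fm[OF U]) simp
  have "?C * ?C = U * dgc n (\<lambda>i. complex_of_real \<bar>f i\<bar> * complex_of_real \<bar>f i\<bar>) * adj_mat U"
    by (rule fm_mult[OF U])
  also have "\<dots> = U * dgc n (\<lambda>i. complex_of_real (f i) * complex_of_real (f i)) * adj_mat U"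
    by (simp add: of_real_mult[symmetric] del: of_real_mult)
  also have "\<dots> = adj_mat ?E * ?E" unfolding adj_fm[OF U] fm_mult[OF U] by simp
  finally have CC: "?C * ?C = adj_mat ?E * ?E" .
  show ?thesis unfolding abs_mat_def dc
  proof (rule the_equality)
    show "psd_mat n ?C \<and> ?C * ?C = adj_mat ?E * ?E" using PC CC by simp
    fix B assume "psd_mat n B \<and> B * B = adj_mat ?E * ?E"
    then show "B = ?C" using sqrt_unique[OF _ PC, of B] CC by simp
  qed
qed



lemma col_carrier_n: "A \<in> carrier_mat n m \<Longrightarrow> col A i \<in> carrier_vec n"
  using col_dim[of A i] carrier_matD(1)[of A n m] by simp

lemma adj_zero[simp]: "adj_mat (0\<^sub>m a b) = 0\<^sub>m b a"
  by (rule eq_matI) simp_all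

lemma cip_smult: assumes "x \<in> carrier_vec n" "y \<in> carrier_vec n"
  shows "(a \<cdot>\<^sub>v x) \<bullet>c (b \<cdot>\<^sub>v y) = a * cnj b * (x \<bullet>c y)"
proof -
  have "(a \<cdot>\<^sub>v x) \<bullet>c (b \<cdot>\<^sub>v y) = (\<Sum>k<n. (a * x $ k) * cnj (b * y $ k))"
    using assms by (simp add: cip)
  also have "\<dots> = a * cnj b * (\<Sum>k<n. x $ k * cnj (y $ k))"
    by (simp add: sum_distrib_left mult_ac)
  also have "\<dots> = a * cnj b * (x \<bullet>c y)" using assms by (simp add: cip)
  finally show ?thesis .
qed

lemma unitary_col: assumes v: "v \<in> carrier_vec n" and v0: "v \<noteq> 0\<^sub>v n"
  shows "\<exists>W c. unitary n W \<and> col W 0 = c \<cdot>\<^sub>v v"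
proof -
  interpret cof_vec_space n "TYPE(complex)" .
  define b where "b = basis_completion v"
  from basis_completion[OF v v0, folded b_def]
  have dist_b: "distinct b" and indep: "\<not> lin_dep (set b)" and bc: "set b \<subseteq> carrier_vec n"
    and hdb: "hd b = v" and len_b: "length b = n" by auto
  have n0: "n \<noteq> 0"
  proof
    assume n: "n = 0"
    have "v = 0\<^sub>v n" by (rule eq_vecI) (use v n in simp_all)
    with v0 show False by simp
  qed
  from hdb len_b n0 obtain vs where bv: "b = v # vs" by (cases b, auto)
  define ws where "ws = gram_schmidt n b"
  from gram_schmidt_result[OF bc dist_b indep ws_def]
  have orth: "corthogonal ws" and wsc: "set ws \<subseteq> carrier_vec n" and lenw: "length ws = n" by (auto simp: len_b)
  have hdw: "hd ws = v" unfolding ws_def bv using v by simp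
  define r where "r = (\<lambda>w. complex_of_real (sqrt (Re (w \<bullet>c w))))"
  define ws' where "ws' = map (\<lambda>w. (1 / r w) \<cdot>\<^sub>v w) ws"
  define W where "W = mat_of_cols n ws'"
  have lenw': "length ws' = n" unfolding ws'_def using lenw by simp
  have wsi: "ws ! i \<in> carrier_vec n" if "i < n" for i using wsc lenw that by auto
  have wsi': "ws' ! i = (1 / r (ws ! i)) \<cdot>\<^sub>v ws ! i" if "i < n" for i unfolding ws'_def using lenw that by simp
  have wsi'c: "ws' ! i \<in> carrier_vec n" if "i < n" for i using wsi'[OF that] wsi[OF that] by simp
  have Wc: "W \<in> carrier_mat n n" unfolding W_def using lenw' mat_of_cols_carrier(1)[of n ws'] by simp
  have Wij: "W $$ (k,j) = ws' ! j $ k" if "k < n" "j < n" for k j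
    unfolding W_def using that lenw' by (simp add: mat_of_cols_def)
  have ip: "ws' ! j \<bullet>c ws' ! i = (if i = j then 1 else 0)" if ij: "i < n" "j < n" for i j
  proof -
    have "ws' ! j \<bullet>c ws' ! i = (1 / r (ws ! j)) * cnj (1 / r (ws ! i)) * (ws ! j \<bullet>c ws ! i)"
      unfolding wsi'[OF ij(1)] wsi'[OF ij(2)] by (rule cip_smult[OF wsi[OF ij(2)] wsi[OF ij(1)]])
    also have "\<dots> = (if i = j then 1 else 0)"
    proof (cases "i = j")
      case False
      then have "ws ! j \<bullet>c ws ! i = 0" using corthogonalD[OF orth, of j i] ij lenw by auto
      then show ?thesis using False by simp
    next
      case True
      have nz: "ws ! i \<bullet>c ws ! i \<noteq> 0" using corthogonalD[OF orth, of i i] ij lenw by auto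
      have re: "ws ! i \<bullet>c ws ! i = complex_of_real (Re (ws ! i \<bullet>c ws ! i))"
        using cip_self[of "ws ! i"] by (simp add: complex_eq_iff)
      have pos: "Re (ws ! i \<bullet>c ws ! i) > 0" using cip_self[of "ws ! i"] nz re by (metis less_eq_real_def of_real_0)
      have "r (ws ! i) * cnj (r (ws ! i)) = ws ! i \<bullet>c ws ! i"
        unfolding r_def using pos re by (simp add: of_real_mult[symmetric] del: of_real_mult)
      then show ?thesis using True nz by (simp add: field_simps)
    qed
    finally show ?thesis .
  qed
  have "adj_mat W * W = 1\<^sub>m n"
  proof (rule eq_matI)
    fix i j assume "i < dim_row (1\<^sub>m n :: complex mat)" "j < dim_col (1\<^sub>m n :: complex mat)"
    then have ij: "i < n" "j < n" by auto
    have "(adj_mat W * W) $$ (i,j) = (\<Sum>k<n. adj_mat W $$ (i,k) * W $$ (k,j))"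
      using ij Wc by (simp add: mult_entry del: index_mult_mat(1))
    also have "\<dots> = (\<Sum>k<n. ws' ! j $ k * cnj (ws' ! i $ k))"
      using ij Wc by (intro sum.cong refl) (simp add: Wij mult.commute)
    also have "\<dots> = ws' ! j \<bullet>c ws' ! i" using wsi'c[OF ij(1)] by (simp add: cip)
    finally show "(adj_mat W * W) $$ (i,j) = (1\<^sub>m n :: complex mat) $$ (i,j)" using ij ip by simp
  qed (use Wc in simp_all)
  then have U: "unitary n W" unfolding unitary_def using Wc by simp
  have "col W 0 = ws' ! 0" unfolding W_def using n0 lenw' wsi'c by simp
  also have "ws ! 0 = v" using hdw lenw n0 hd_conv_nth[of ws] by force
  then have "ws' ! 0 = (1 / r v) \<cdot>\<^sub>v v" using wsi'[of 0] n0 by simp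
  finally show ?thesis using U by blast
qed


lemma adj_four_block: assumes "A \<in> carrier_mat r1 c1" "B \<in> carrier_mat r1 c2" "C \<in> carrier_mat r2 c1" "D \<in> carrier_mat r2 c2"
  shows "adj_mat (four_block_mat A B C D) = four_block_mat (adj_mat A) (adj_mat C) (adj_mat B) (adj_mat D)"
proof (rule eq_matI)
  fix i j assume "i < dim_row (four_block_mat (adj_mat A) (adj_mat C) (adj_mat B) (adj_mat D))"
    "j < dim_col (four_block_mat (adj_mat A) (adj_mat C) (adj_mat B) (adj_mat D))"
  then have ij: "i < c1 + c2" "j < r1 + r2" using assms by auto
  show "adj_mat (four_block_mat A B C D) $$ (i,j) = four_block_mat (adj_mat A) (adj_mat C) (adj_mat B) (adj_mat D) $$ (i,j)"
    using ij assms by (simp add: carrier_matD)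
qed (use assms in \<open>simp_all add: carrier_matD\<close>)

lemma spectral: fixes es :: "complex list"
  assumes "A \<in> carrier_mat n n" "adj_mat A = A" "char_poly A = (\<Prod>e \<leftarrow> es. [:- e, 1:])"
  shows "\<exists>U. unitary n U \<and> adj_mat U * A * U = dgc n (\<lambda>i. es ! i)"
  using assms
proof (induct es arbitrary: n A)
  case Nil
  from degree_monic_char_poly[OF Nil(1)] Nil(3) have n: "n = 0" by auto
  have "unitary n (1\<^sub>m n)" unfolding unitary_def by simp
  moreover have "adj_mat (1\<^sub>m n) * A * 1\<^sub>m n = dgc n (\<lambda>i. [] ! i)"
    by (rule eq_matI) (use Nil(1) n in simp_all)
  ultimately show ?case by blast
next
  case (Cons e es n A)
  from Cons have A: "A \<in> carrier_mat n n" and hA: "adj_mat A = A" by auto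
  let ?n1 = "n - 1"
  have cp: "char_poly A = [: -e, 1 :] * (\<Prod>e \<leftarrow> es. [:- e, 1:])" using Cons(4) by simp
  have mon: "monic (\<Prod>e\<leftarrow> es. [:- e, 1:])" by (rule monic_prod_list, auto)
  have deg: "degree (char_poly A) = Suc (degree (\<Prod>e\<leftarrow> es. [:- e, 1:]))" unfolding cp
    by (subst degree_mult_eq, insert mon, auto)
  with degree_monic_char_poly[OF A] have n: "n \<noteq> 0" by auto
  have e: "eigenvalue A e" unfolding eigenvalue_root_char_poly[OF A] cp by simp
  define v where "v = find_eigenvector A e"
  from find_eigenvector[OF A e] have ev: "eigenvector A v e" unfolding v_def .
  then have v: "v \<in> carrier_vec n" and v0: "v \<noteq> 0\<^sub>v n" and Av: "A *\<^sub>v v = e \<cdot>\<^sub>v v"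
    unfolding eigenvector_def using A by auto
  obtain W c where W: "unitary n W" and cW: "col W 0 = c \<cdot>\<^sub>v v" using unitary_col[OF v v0] by blast
  have Wc: "W \<in> carrier_mat n n" and aW: "adj_mat W \<in> carrier_mat n n" using W unitary_def by auto
  have AW0: "A *\<^sub>v col W 0 = e \<cdot>\<^sub>v col W 0"
    unfolding cW using mult_mat_vec[OF A v, of c] Av by (auto simp: smult_smult_assoc mult.commute)
  define A' where "A' = adj_mat W * A * W"
  have A'c: "A' \<in> carrier_mat n n" unfolding A'_def using Wc aW A by (simp add: sq_mult[of _ n])
  have hA': "adj_mat A' = A'"
  proof -
    have "adj_mat A' = adj_mat W * adj_mat (adj_mat W * A)"
      unfolding A'_def using Wc aW A by (simp add: adj_mult[of _ n n _ n] sq_mult[of _ n])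
    also have "adj_mat (adj_mat W * A) = A * W" using Wc aW A hA by (simp add: adj_mult[of _ n n _ n])
    finally show ?thesis unfolding A'_def using Wc aW A by (simp add: fm_assoc[of _ n] sq_mult[of _ n] del: assoc_mult_mat)
  qed
  have col0: "A' $$ (i,0) = (if i = 0 then e else 0)" if i: "i < n" for i
  proof -
    have "A' $$ (i,0) = (adj_mat W * (A * W)) $$ (i,0)" unfolding A'_def using Wc aW A by (simp add: fm_assoc[of _ n] del: assoc_mult_mat)
    also have "\<dots> = (adj_mat W *\<^sub>v col (A * W) 0) $ i" using i n Wc aW A by simp
    also have "col (A * W) 0 = e \<cdot>\<^sub>v col W 0" using col_mult2[OF A Wc, of 0] n AW0 by simp
    also have "adj_mat W *\<^sub>v (e \<cdot>\<^sub>v col W 0) = e \<cdot>\<^sub>v (adj_mat W *\<^sub>v col W 0)"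
      using aW Wc col_carrier_n[OF Wc, of 0] by (intro mult_mat_vec[of _ n n]) simp_all
    also have "(e \<cdot>\<^sub>v (adj_mat W *\<^sub>v col W 0)) $ i = e * (adj_mat W * W) $$ (i,0)"
      using i n aW Wc by simp
    also have "adj_mat W * W = 1\<^sub>m n" using W unitary_def by simp
    finally show ?thesis using i n by simp
  qed
  have ereal: "cnj e = e" using herm_entry[OF hA' A'c, of 0 0] col0[of 0] n by simp
  have row0: "A' $$ (0,j) = (if j = 0 then e else 0)" if j: "j < n" for j
    using herm_entry[OF hA' A'c, of 0 j] col0[OF j] j n ereal by auto
  define A3 where "A3 = mat ?n1 ?n1 (\<lambda>(i,j). A' $$ (Suc i, Suc j))"
  define A1 where "A1 = (mat 1 1 (\<lambda>_. e) :: complex mat)"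
  have A3c: "A3 \<in> carrier_mat ?n1 ?n1" unfolding A3_def by simp
  have A1c: "A1 \<in> carrier_mat 1 1" unfolding A1_def by simp
  have nn: "1 + ?n1 = n" using n by simp
  have blk: "A' = four_block_mat A1 (0\<^sub>m 1 ?n1) (0\<^sub>m ?n1 1) A3"
  proof (rule eq_matI)
    fix i j assume "i < dim_row (four_block_mat A1 (0\<^sub>m 1 ?n1) (0\<^sub>m ?n1 1) A3)"
      "j < dim_col (four_block_mat A1 (0\<^sub>m 1 ?n1) (0\<^sub>m ?n1 1) A3)"
    then have ij: "i < n" "j < n" using A1c A3c nn by auto
    show "A' $$ (i,j) = four_block_mat A1 (0\<^sub>m 1 ?n1) (0\<^sub>m ?n1 1) A3 $$ (i,j)"
    proof (cases "i = 0")
      case True then show ?thesis using ij row0 A1c A3c nn by (simp add: A1_def)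
    next
      case False
      show ?thesis
      proof (cases "j = 0")
        case True then show ?thesis using ij col0 A1c A3c nn False by (simp add: A1_def)
      next
        case False2: False
        obtain i' j' where i': "i = Suc i'" and j': "j = Suc j'" using False False2 by (cases i; cases j) auto
        show ?thesis using ij A1c A3c nn False False2 by (simp add: A3_def i' j')
      qed
    qed
  qed (use A'c A1c A3c nn in simp_all)
  have hA3: "adj_mat A3 = A3"
  proof (rule eq_matI)
    fix i j assume "i < dim_row A3" "j < dim_col A3"
    then have ij: "i < ?n1" "j < ?n1" using A3c by auto
    show "adj_mat A3 $$ (i,j) = A3 $$ (i,j)"
      using ij herm_entry[OF hA' A'c, of "Suc i" "Suc j"] A3c by (simp add: A3_def)
  qed (use A3c in simp_all)
  have sim: "similar_mat A' A"
  proof -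
    have "similar_mat_wit A' A (adj_mat W) W"
      by (rule similar_mat_witI[of _ _ n]) (use W Wc aW A A'c unitary_right[OF W] in \<open>simp_all add: unitary_def A'_def\<close>)
    then show ?thesis unfolding similar_mat_def by blast
  qed
  have "char_poly A' = [: -e, 1 :] * (\<Prod>e \<leftarrow> es. [:- e, 1:])" using cp char_poly_similar[OF sim] by simp
  also have "char_poly A' = char_poly A1 * char_poly A3"
    unfolding blk by (rule char_poly_four_block_zeros_col[OF A1c _ A3c]) simp
  also have "char_poly A1 = [: -e, 1 :]"
    by (simp add: A1_def char_poly_defs det_def sign_def)
  finally have cp3: "char_poly A3 = (\<Prod>e \<leftarrow> es. [:- e, 1:])"
    by (metis mult_cancel_left pCons_eq_0_iff zero_neq_one)
  obtain V where V: "unitary ?n1 V" and VA3: "adj_mat V * A3 * V = dgc ?n1 (\<lambda>i. es ! i)"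
    using Cons(1)[OF A3c hA3 cp3] by blast
  have Vc: "V \<in> carrier_mat ?n1 ?n1" and aV: "adj_mat V \<in> carrier_mat ?n1 ?n1" using V unitary_def by auto
  define V' where "V' = four_block_mat (1\<^sub>m 1) (0\<^sub>m 1 ?n1) (0\<^sub>m ?n1 1) V"
  have V'c: "V' \<in> carrier_mat n n" unfolding V'_def using Vc nn by (metis four_block_carrier_mat one_carrier_mat)
  have aV': "adj_mat V' = four_block_mat (1\<^sub>m 1) (0\<^sub>m 1 ?n1) (0\<^sub>m ?n1 1) (adj_mat V)"
    unfolding V'_def by (subst adj_four_block[of _ 1 1 _ ?n1 _ ?n1]) (use Vc in simp_all)
  have "adj_mat V' * V' = four_block_mat (1\<^sub>m 1) (0\<^sub>m 1 ?n1) (0\<^sub>m ?n1 1) (adj_mat V * V)"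
    unfolding aV' unfolding V'_def
    by (subst mult_four_block_mat[of _ 1 1 _ "n-1" _ "n-1" _ _ 1 _ "n-1"]) (use Vc aV mult_carrier_mat[OF aV Vc] in simp_all)
  also have "\<dots> = 1\<^sub>m n" using V unfolding unitary_def using nn by simp
  finally have UV': "unitary n V'" unfolding unitary_def using V'c by simp
  define U where "U = W * V'"
  have U: "unitary n U" unfolding U_def by (rule unitary_mult[OF W UV'])
  have "adj_mat U * A * U = adj_mat V' * A' * V'"
    unfolding U_def A'_def using Wc aW V'c A
    by (simp add: adj_mult[of _ n n _ n] fm_assoc[of _ n] sq_mult[of _ n] del: assoc_mult_mat)
  also have "\<dots> = four_block_mat A1 (0\<^sub>m 1 ?n1) (0\<^sub>m ?n1 1) (adj_mat V * A3 * V)"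
  proof -
    have s1: "four_block_mat (1\<^sub>m 1) (0\<^sub>m 1 ?n1) (0\<^sub>m ?n1 1) (adj_mat V) * four_block_mat A1 (0\<^sub>m 1 ?n1) (0\<^sub>m ?n1 1) A3
      = four_block_mat A1 (0\<^sub>m 1 ?n1) (0\<^sub>m ?n1 1) (adj_mat V * A3)"
      by (subst mult_four_block_mat[of _ 1 1 _ "n-1" _ "n-1" _ _ 1 _ "n-1"])
        (use Vc aV A1c A3c mult_carrier_mat[OF aV A3c] in simp_all)
    have s2: "four_block_mat A1 (0\<^sub>m 1 ?n1) (0\<^sub>m ?n1 1) (adj_mat V * A3) * four_block_mat (1\<^sub>m 1) (0\<^sub>m 1 ?n1) (0\<^sub>m ?n1 1) V
      = four_block_mat A1 (0\<^sub>m 1 ?n1) (0\<^sub>m ?n1 1) (adj_mat V * A3 * V)"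
      by (subst mult_four_block_mat[of _ 1 1 _ "n-1" _ "n-1" _ _ 1 _ "n-1"])
        (use Vc aV A1c A3c mult_carrier_mat[OF aV A3c] mult_carrier_mat[OF mult_carrier_mat[OF aV A3c] Vc] in simp_all)
    show ?thesis unfolding aV' unfolding blk V'_def s1 s2 ..
  qed
  also have "\<dots> = dgc n (\<lambda>i. (e # es) ! i)"
  proof (rule eq_matI)
    fix i j assume "i < dim_row (dgc n (\<lambda>i. (e # es) ! i))" "j < dim_col (dgc n (\<lambda>i. (e # es) ! i))"
    then have ij: "i < n" "j < n" by auto
    show "four_block_mat A1 (0\<^sub>m 1 ?n1) (0\<^sub>m ?n1 1) (adj_mat V * A3 * V) $$ (i,j) = dgc n (\<lambda>i. (e # es) ! i) $$ (i,j)"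
      unfolding VA3 using ij nn A1c by (cases i; cases j) (simp_all add: A1_def)
  qed (use nn A1c Vc in simp_all)
  finally show ?case using U by blast
qed



lemma dgc_cong: "(\<And>i. i < n \<Longrightarrow> f i = g i) \<Longrightarrow> dgc n f = dgc n g"
  by (rule eq_matI) simp_all

lemma unitary_back: assumes U: "unitary n U" and A: "A \<in> carrier_mat n n" and X: "adj_mat U * A * U = X"
  shows "A = U * X * adj_mat U"
proof -
  have Uc: "U \<in> carrier_mat n n" and aU: "adj_mat U \<in> carrier_mat n n" using U unitary_def by auto
  have "U * X * adj_mat U = (U * adj_mat U) * A * (U * adj_mat U)"
    unfolding X[symmetric] using Uc aU A by (simp add: fm_assoc[of _ n] sq_mult[of _ n] del: assoc_mult_mat)
  also have "\<dots> = A" using unitary_right[OF U] A by simp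
  finally show ?thesis by simp
qed

lemma herm_spectral_real: assumes A: "A \<in> carrier_mat n n" and h: "adj_mat A = A"
  shows "\<exists>U f. unitary n U \<and> A = U * dgc n (\<lambda>i. complex_of_real (f i)) * adj_mat U"
proof -
  obtain es where es: "char_poly A = (\<Prod>a \<leftarrow> es. [:- a, 1:])" using char_poly_factorized[OF A] by blast
  obtain U where U: "unitary n U" and D: "adj_mat U * A * U = dgc n (\<lambda>i. es ! i)" using spectral[OF A h es] by blast
  have Uc: "U \<in> carrier_mat n n" and aU: "adj_mat U \<in> carrier_mat n n" using U unitary_def by auto
  have hD: "adj_mat (dgc n (\<lambda>i. es ! i)) = dgc n (\<lambda>i. es ! i)"
    unfolding D[symmetric] using Uc aU A h by (simp add: adj_mult[of _ n n _ n] sq_mult[of _ n] fm_assoc[of _ n] del: assoc_mult_mat)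
  have r: "es ! i = complex_of_real (Re (es ! i))" if i: "i < n" for i
  proof -
    have "cnj (es ! i) = es ! i" using arg_cong[OF hD, of "\<lambda>M. M $$ (i,i)"] i by (simp add: adj_dgc)
    then show ?thesis by (simp add: complex_eq_iff)
  qed
  have "dgc n (\<lambda>i. es ! i) = dgc n (\<lambda>i. complex_of_real (Re (es ! i)))" by (rule dgc_cong) (use r in simp)
  then have "A = U * dgc n (\<lambda>i. complex_of_real (Re (es ! i))) * adj_mat U" using unitary_back[OF U A D] by simp
  then show ?thesis using U by (intro exI[of _ U] exI[of _ "\<lambda>i. Re (es ! i)"]) simp
qed

lemma diag_conj_entry: assumes A: "A \<in> carrier_mat n n" and U: "U \<in> carrier_mat n n" and i: "i < n"
  shows "(adj_mat U * A * U) $$ (i,i) = (A *\<^sub>v col U i) \<bullet>c col U i"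
proof -
  have aU: "adj_mat U \<in> carrier_mat n n" using U by simp
  have "(adj_mat U * A * U) $$ (i,i) = (adj_mat U * (A * U)) $$ (i,i)" using A U aU by (simp add: fm_assoc[of _ n] del: assoc_mult_mat)
  also have "\<dots> = (\<Sum>k<n. adj_mat U $$ (i,k) * (A * U) $$ (k,i))" using A U aU i by (simp add: mult_entry del: index_mult_mat(1))
  also have "\<dots> = (\<Sum>k<n. (A *\<^sub>v col U i) $ k * cnj (col U i $ k))"
  proof (rule sum.cong[OF refl])
    fix k assume k: "k \<in> {..<n}"
    have "(A *\<^sub>v col U i) $ k = (\<Sum>j<n. A $$ (k,j) * col U i $ j)" using A U k by (simp add: mv_entry del: index_mult_mat_vec)
    also have "\<dots> = (A * U) $$ (k,i)" using A U k i by (simp add: mult_entry del: index_mult_mat(1))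
    finally show "adj_mat U $$ (i,k) * (A * U) $$ (k,i) = (A *\<^sub>v col U i) $ k * cnj (col U i $ k)"
      using U i k by simp
  qed
  also have "\<dots> = (A *\<^sub>v col U i) \<bullet>c col U i" using U by (simp add: cip)
  finally show ?thesis .
qed

lemma tr_dgc_mult: assumes X: "X \<in> carrier_mat n n"
  shows "tr_mat (dgc n f * X) = (\<Sum>i<n. f i * X $$ (i,i))"
proof -
  have "tr_mat (dgc n f * X) = (\<Sum>i<n. \<Sum>k<n. dgc n f $$ (i,k) * X $$ (k,i))" using X by (intro tr_mult) auto
  also have "\<dots> = (\<Sum>i<n. \<Sum>k\<in>{i}. dgc n f $$ (i,k) * X $$ (k,i))"
    by (intro sum.cong refl sum.mono_neutral_right) auto
  finally show ?thesis by simp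
qed

lemma tr_fm_mult: assumes U: "unitary n U" and P: "P \<in> carrier_mat n n"
  shows "tr_mat (U * dgc n f * adj_mat U * P) = (\<Sum>i<n. f i * (adj_mat U * P * U) $$ (i,i))"
proof -
  have Uc: "U \<in> carrier_mat n n" and aU: "adj_mat U \<in> carrier_mat n n" using U unitary_def by auto
  have F: "dgc n f \<in> carrier_mat n n" by simp
  have "tr_mat (U * dgc n f * adj_mat U * P) = tr_mat (U * (dgc n f * adj_mat U * P))"
    using Uc aU P F by (simp add: fm_assoc[of _ n] sq_mult[of _ n] del: assoc_mult_mat)
  also have "\<dots> = tr_mat ((dgc n f * adj_mat U * P) * U)"
    using Uc aU P F by (intro tr_mult_comm[of _ n n]) (simp_all add: sq_mult[of _ n])
  also have "(dgc n f * adj_mat U * P) * U = dgc n f * (adj_mat U * P * U)"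
    using Uc aU P F by (simp add: fm_assoc[of _ n] sq_mult[of _ n] del: assoc_mult_mat)
  also have "tr_mat \<dots> = (\<Sum>i<n. f i * (adj_mat U * P * U) $$ (i,i))"
    using Uc aU P by (intro tr_dgc_mult) (simp add: sq_mult[of _ n])
  finally show ?thesis .
qed

lemma tr_unitary_conj: assumes U: "unitary n U" and P: "P \<in> carrier_mat n n"
  shows "tr_mat (adj_mat U * P * U) = tr_mat P"
proof -
  have Uc: "U \<in> carrier_mat n n" and aU: "adj_mat U \<in> carrier_mat n n" using U unitary_def by auto
  have "tr_mat (adj_mat U * P * U) = tr_mat (U * (adj_mat U * P))"
    using Uc aU P by (intro tr_mult_comm[of _ n n]) (simp_all add: sq_mult[of _ n])
  also have "U * (adj_mat U * P) = (U * adj_mat U) * P"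
    using Uc aU P by (simp add: fm_assoc[of _ n] sq_mult[of _ n] del: assoc_mult_mat)
  also have "\<dots> = P" using unitary_right[OF U] P by simp
  finally show ?thesis .
qed

lemma herm_tr_sq: assumes Y: "Y \<in> carrier_mat n n" and h: "adj_mat Y = Y"
  shows "0 \<le> Re (tr_mat (Y * Y))"
proof -
  have "tr_mat (Y * Y) = (\<Sum>i<n. \<Sum>k<n. Y $$ (i,k) * Y $$ (k,i))" using Y by (intro tr_mult) auto
  also have "\<dots> = (\<Sum>i<n. \<Sum>k<n. Y $$ (i,k) * cnj (Y $$ (i,k)))"
  proof (intro sum.cong refl)
    fix i k assume "i \<in> {..<n}" "k \<in> {..<n}"
    then show "Y $$ (i,k) * Y $$ (k,i) = Y $$ (i,k) * cnj (Y $$ (i,k))" using herm_entry[OF h Y, of k i] by simp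
  qed
  finally have "Re (tr_mat (Y * Y)) = (\<Sum>i<n. \<Sum>k<n. Re (Y $$ (i,k) * cnj (Y $$ (i,k))))" by (simp add: Re_sum)
  also have "\<dots> \<ge> 0" by (intro sum_nonneg) (simp add: sq_nonneg_c)
  finally show ?thesis .
qed

lemma tr_sq_identity: assumes A: "A \<in> carrier_mat n n" and B: "B \<in> carrier_mat n n"
  shows "tr_mat (B * B) = tr_mat ((B - A) * (B - A)) + tr_mat (A * B) + tr_mat (B * A) - tr_mat (A * A)"
proof -
  have BA: "B - A \<in> carrier_mat n n" using A by (rule minus_carrier_mat)
  have e: "(B - A) $$ (i,k) = B $$ (i,k) - A $$ (i,k)" if "i < n" "k < n" for i k using that A by simp
  have "tr_mat ((B - A) * (B - A)) + tr_mat (A * B) + tr_mat (B * A) - tr_mat (A * A)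
    = (\<Sum>i<n. \<Sum>k<n. (B $$ (i,k) - A $$ (i,k)) * (B $$ (k,i) - A $$ (k,i)))
      + (\<Sum>i<n. \<Sum>k<n. A $$ (i,k) * B $$ (k,i)) + (\<Sum>i<n. \<Sum>k<n. B $$ (i,k) * A $$ (k,i))
      - (\<Sum>i<n. \<Sum>k<n. A $$ (i,k) * A $$ (k,i))"
    unfolding tr_mult[OF BA BA] tr_mult[OF A B] tr_mult[OF B A] tr_mult[OF A A]
    by (simp add: e)
  also have "\<dots> = (\<Sum>i<n. \<Sum>k<n. (B $$ (i,k) - A $$ (i,k)) * (B $$ (k,i) - A $$ (k,i))
      + A $$ (i,k) * B $$ (k,i) + B $$ (i,k) * A $$ (k,i) - A $$ (i,k) * A $$ (k,i))"
    by (simp add: sum.distrib sum_subtractf)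
  also have "\<dots> = (\<Sum>i<n. \<Sum>k<n. B $$ (i,k) * B $$ (k,i))"
    by (intro sum.cong refl) (simp add: algebra_simps)
  also have "\<dots> = tr_mat (B * B)" unfolding tr_mult[OF B B] ..
  finally show ?thesis by simp
qed

lemma tr_mult_minus: assumes "A \<in> carrier_mat n n" "B \<in> carrier_mat n n" "C \<in> carrier_mat n n"
  shows "tr_mat (A * (B - C)) = tr_mat (A * B) - tr_mat (A * C)"
proof -
  have "A * (B - C) = A * B - A * C" using assms by (intro mult_minus_distrib_mat[where nr=n and n=n and nc=n])
  then show ?thesis using assms by (simp add: tr_minus[of _ n] sq_mult[of _ n])
qed



lemma clip_facts: fixes l x y :: real assumes xy: "x \<le> y"
  shows "min (max l x) y - l = pos_part (x - l) - pos_part (l - y)"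
    and "\<bar>l - min (max l x) y\<bar> = pos_part (x - l) + pos_part (l - y)"
    and "min (max l x) y * (l - min (max l x) y) = y * pos_part (l - y) - x * pos_part (x - l)"
    and "x \<le> min (max l x) y" and "min (max l x) y \<le> y"
  using xy by (auto simp: pos_part_def min_def max_def algebra_simps)

lemma re_tr_fm: "unitary n U \<Longrightarrow> Re (tr_mat (U * dgc n (\<lambda>i. complex_of_real (f i)) * adj_mat U)) = (\<Sum>i<n. f i)"
  by (simp add: tr_fm Re_sum)

lemma lower_bound:
  fixes U :: "complex mat" and l :: "nat \<Rightarrow> real" and x y \<epsilon> :: real
  assumes U: "unitary n U" and rho: "\<rho> = U * dgc n (\<lambda>i. complex_of_real (l i)) * adj_mat U"
    and xy: "x \<le> y" and sx: "(\<Sum>i<n. pos_part (x - l i)) = \<epsilon>" and sy: "(\<Sum>i<n. pos_part (l i - y)) = \<epsilon>"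
    and sig: "density_op n \<sigma>" and td: "trace_dist \<rho> \<sigma> \<le> \<epsilon>" and trr: "tr_mat \<rho> = 1"
  shows "(\<Sum>i<n. (min (max (l i) x) y)\<^sup>2) \<le> Re (tr_mat (\<sigma> * \<sigma>))"
proof -
  define \<mu> where "\<mu> = (\<lambda>i. min (max (l i) x) y)"
  define M where "M = U * dgc n (\<lambda>i. complex_of_real (\<mu> i)) * adj_mat U"
  have Uc: "U \<in> carrier_mat n n" and aU: "adj_mat U \<in> carrier_mat n n" using U unitary_def by auto
  have Mc: "M \<in> carrier_mat n n" unfolding M_def using Uc aU by (simp add: sq_mult[of _ n])
  have rc: "\<rho> \<in> carrier_mat n n" unfolding rho using Uc aU by (simp add: sq_mult[of _ n])
  have hr: "adj_mat \<rho> = \<rho>" using herm_fm[OF U, of l] unfolding rho hermitian_mat_def .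
  have hM: "adj_mat M = M" using herm_fm[OF U, of \<mu>] unfolding M_def hermitian_mat_def .
  have sc: "\<sigma> \<in> carrier_mat n n" and hs: "adj_mat \<sigma> = \<sigma>" and trs: "tr_mat \<sigma> = 1"
    using sig unfolding density_op_def psd_mat_def hermitian_mat_def by auto
  define E where "E = \<rho> - \<sigma>"
  have Ec: "E \<in> carrier_mat n n" unfolding E_def using sc by (rule minus_carrier_mat)
  have hE: "adj_mat E = E" unfolding E_def using adj_minus[OF rc sc] hr hs by simp
  obtain V \<delta> where V: "unitary n V" and Ed: "E = V * dgc n (\<lambda>i. complex_of_real (\<delta> i)) * adj_mat V"
    using herm_spectral_real[OF Ec hE] by blast
  have Vc: "V \<in> carrier_mat n n" and aV: "adj_mat V \<in> carrier_mat n n" using V unitary_def by auto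
  have "trace_dist \<rho> \<sigma> = (\<Sum>i<n. \<bar>\<delta> i\<bar>) / 2"
    unfolding trace_dist_def E_def[symmetric] Ed abs_fm[OF V] re_tr_fm[OF V] ..
  then have sabs: "(\<Sum>i<n. \<bar>\<delta> i\<bar>) \<le> 2 * \<epsilon>" using td by simp
  have "tr_mat E = 0" unfolding E_def using tr_minus[OF rc sc] trr trs by simp
  then have sd: "(\<Sum>i<n. \<delta> i) = 0" using re_tr_fm[OF V, of \<delta>] unfolding Ed by simp
  define dp where "dp = (\<lambda>i. pos_part (\<delta> i))"
  define dn where "dn = (\<lambda>i. pos_part (- \<delta> i))"
  have dpn: "\<delta> i = dp i - dn i" "\<bar>\<delta> i\<bar> = dp i + dn i" "0 \<le> dp i" "0 \<le> dn i" for i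
    unfolding dp_def dn_def pos_part_def by auto
  define P where "P = V * dgc n (\<lambda>i. complex_of_real (dp i)) * adj_mat V"
  define Q where "Q = V * dgc n (\<lambda>i. complex_of_real (dn i)) * adj_mat V"
  have Pc: "P \<in> carrier_mat n n" unfolding P_def using Vc aV by (simp add: sq_mult[of _ n])
  have Qc: "Q \<in> carrier_mat n n" unfolding Q_def using Vc aV by (simp add: sq_mult[of _ n])
  have EPQ: "E = P - Q" unfolding P_def Q_def fm_minus[OF V] Ed
    by (intro arg_cong2[where f="(*)"] arg_cong2[where f="(*)"] refl dgc_cong) (simp add: dpn(1))
  define t where "t = (\<Sum>i<n. dp i)"
  have tn: "(\<Sum>i<n. dn i) = t"
    using sd unfolding t_def dpn(1) sum_subtractf by simp
  have tle: "t \<le> \<epsilon>" using sabs unfolding dpn(2) sum.distrib tn t_def by simp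
  have PP: "psd_mat n P" unfolding P_def by (rule psd_fm[OF V]) (simp add: dpn)
  have PQ: "psd_mat n Q" unfolding Q_def by (rule psd_fm[OF V]) (simp add: dpn)
  have trP: "Re (tr_mat P) = t" unfolding P_def re_tr_fm[OF V] t_def ..
  have trQ: "Re (tr_mat Q) = t" unfolding Q_def re_tr_fm[OF V] tn ..
  have trMX: "Re (tr_mat (M * X)) = (\<Sum>i<n. \<mu> i * Re ((adj_mat U * X * U) $$ (i,i)))"
    and dX: "\<And>i. i < n \<Longrightarrow> 0 \<le> Re ((adj_mat U * X * U) $$ (i,i))"
    and sX: "(\<Sum>i<n. Re ((adj_mat U * X * U) $$ (i,i))) = Re (tr_mat X)"
    if X: "psd_mat n X" for X
  proof -
    have Xc: "X \<in> carrier_mat n n" using X psd_carrier by auto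
    show "Re (tr_mat (M * X)) = (\<Sum>i<n. \<mu> i * Re ((adj_mat U * X * U) $$ (i,i)))"
      unfolding M_def tr_fm_mult[OF U Xc] by (simp add: Re_sum)
    show "0 \<le> Re ((adj_mat U * X * U) $$ (i,i))" if i: "i < n" for i
      unfolding diag_conj_entry[OF Xc Uc i] using psd_qf[OF X col_carrier_n[OF Uc]] by simp
    have "(\<Sum>i<n. Re ((adj_mat U * X * U) $$ (i,i))) = Re (tr_mat (adj_mat U * X * U))"
      unfolding tr_mat_def using Uc aU Xc by (simp add: Re_sum)
    also have "\<dots> = Re (tr_mat X)" using tr_unitary_conj[OF U Xc] by simp
    finally show "(\<Sum>i<n. Re ((adj_mat U * X * U) $$ (i,i))) = Re (tr_mat X)" .
  qed
  have mux: "x \<le> \<mu> i" "\<mu> i \<le> y" for i unfolding \<mu>_def using clip_facts[OF xy, of "l i"] by auto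
  have MP: "Re (tr_mat (M * P)) \<le> y * t"
  proof -
    have "Re (tr_mat (M * P)) = (\<Sum>i<n. \<mu> i * Re ((adj_mat U * P * U) $$ (i,i)))" by (rule trMX[OF PP])
    also have "\<dots> \<le> (\<Sum>i<n. y * Re ((adj_mat U * P * U) $$ (i,i)))"
      by (intro sum_mono mult_right_mono mux) (simp add: dX[OF PP])
    also have "\<dots> = y * t" unfolding sum_distrib_left[symmetric] sX[OF PP] trP ..
    finally show ?thesis .
  qed
  have MQ: "x * t \<le> Re (tr_mat (M * Q))"
  proof -
    have "x * t = (\<Sum>i<n. x * Re ((adj_mat U * Q * U) $$ (i,i)))" unfolding sum_distrib_left[symmetric] sX[OF PQ] trQ ..
    also have "\<dots> \<le> (\<Sum>i<n. \<mu> i * Re ((adj_mat U * Q * U) $$ (i,i)))"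
      by (intro sum_mono mult_right_mono mux) (simp add: dX[OF PQ])
    also have "\<dots> = Re (tr_mat (M * Q))" by (rule trMX[OF PQ, symmetric])
    finally show ?thesis .
  qed
  have Mr: "Re (tr_mat (M * \<rho>)) = (\<Sum>i<n. \<mu> i * l i)"
    unfolding M_def rho fm_mult[OF U] of_real_mult[symmetric] re_tr_fm[OF U] ..
  have MM: "Re (tr_mat (M * M)) = (\<Sum>i<n. (\<mu> i)\<^sup>2)"
    unfolding M_def fm_mult[OF U] of_real_mult[symmetric] re_tr_fm[OF U] by (simp add: power2_eq_square)
  have cl: "(\<Sum>i<n. \<mu> i * l i) - (\<Sum>i<n. (\<mu> i)\<^sup>2) = (y - x) * \<epsilon>"
  proof -
    have "(\<Sum>i<n. \<mu> i * l i) - (\<Sum>i<n. (\<mu> i)\<^sup>2) = (\<Sum>i<n. \<mu> i * (l i - \<mu> i))"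
      by (simp add: sum_subtractf[symmetric] algebra_simps power2_eq_square)
    also have "\<dots> = (\<Sum>i<n. y * pos_part (l i - y) - x * pos_part (x - l i))"
      unfolding \<mu>_def using clip_facts(3)[OF xy] by simp
    also have "\<dots> = (y - x) * \<epsilon>" unfolding sum_subtractf sum_distrib_left[symmetric] sx sy by (simp add: algebra_simps)
    finally show ?thesis .
  qed
  have Yc: "\<sigma> - M \<in> carrier_mat n n" using Mc by (rule minus_carrier_mat)
  have hY: "adj_mat (\<sigma> - M) = \<sigma> - M" using adj_minus[OF sc Mc] hs hM by simp
  have id1: "tr_mat (\<sigma> * \<sigma>) = tr_mat ((\<sigma> - M) * (\<sigma> - M)) + tr_mat (M * \<sigma>) + tr_mat (\<sigma> * M) - tr_mat (M * M)"
    by (rule tr_sq_identity[OF Mc sc])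
  have id2: "tr_mat (\<sigma> * M) = tr_mat (M * \<sigma>)" by (rule tr_mult_comm[OF sc Mc])
  have id3: "tr_mat (M * E) = tr_mat (M * \<rho>) - tr_mat (M * \<sigma>)" unfolding E_def by (rule tr_mult_minus[OF Mc rc sc])
  have id4: "tr_mat (M * E) = tr_mat (M * P) - tr_mat (M * Q)" unfolding EPQ by (rule tr_mult_minus[OF Mc Pc Qc])
  have Ms: "Re (tr_mat (M * \<sigma>)) = (\<Sum>i<n. \<mu> i * l i) - Re (tr_mat (M * P)) + Re (tr_mat (M * Q))"
    using id3 id4 Mr by (simp add: complex_eq_iff)
  have "Re (tr_mat (\<sigma> * \<sigma>)) = Re (tr_mat ((\<sigma> - M) * (\<sigma> - M))) + 2 * Re (tr_mat (M * \<sigma>)) - Re (tr_mat (M * M))"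
    unfolding id1 id2 by simp
  moreover have "0 \<le> Re (tr_mat ((\<sigma> - M) * (\<sigma> - M)))" by (rule herm_tr_sq[OF Yc hY])
  moreover have "(y - x) * t \<le> (y - x) * \<epsilon>" using tle xy by (simp add: mult_left_mono)
  ultimately have "Re (tr_mat (\<sigma> * \<sigma>)) \<ge> (\<Sum>i<n. (\<mu> i)\<^sup>2)"
    using Ms MP MQ MM cl by (simp add: algebra_simps)
  then show ?thesis unfolding \<mu>_def .
qed


theorem mainTheorem3:
  fixes D :: nat and \<rho> :: "complex mat" and lam :: "real list" and \<epsilon> x y :: real
  assumes dens: "density_op D \<rho>"
    and len: "length lam = D"
    and spec: "char_poly \<rho> = (\<Prod>a \<leftarrow> lam. [:- complex_of_real a, 1:])"
    and eps: "0 < \<epsilon>" "\<epsilon> < 1"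
    and x_ge: "x \<ge> Min (set lam)"
    and x_def: "(\<Sum>i<D. pos_part (x - lam ! i)) = \<epsilon>"
    and y_def: "(\<Sum>i<D. pos_part (lam ! i - y)) = \<epsilon>"
    and xy: "x \<le> y"
  shows "Inf ((\<lambda>\<sigma>. Re (tr_mat (\<sigma> * \<sigma>))) ` eps_ball D \<epsilon> \<rho>)
           = (\<Sum>i<D. (min (max (lam ! i) x) y)\<^sup>2)
       \<and> smooth_renyi2 D \<epsilon> \<rho> = - log 2 (\<Sum>i<D. (min (max (lam ! i) x) y)\<^sup>2)"
proof -
  define l where "l = (\<lambda>i. lam ! i)"
  define \<mu> where "\<mu> = (\<lambda>i. min (max (l i) x) y)"
  have rc: "\<rho> \<in> carrier_mat D D" and hr: "adj_mat \<rho> = \<rho>" and trr: "tr_mat \<rho> = 1"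
    using dens unfolding density_op_def psd_mat_def hermitian_mat_def by auto
  have cp: "char_poly \<rho> = (\<Prod>e \<leftarrow> map complex_of_real lam. [:- e, 1:])" using spec by (simp add: o_def)
  obtain U where U: "unitary D U" and Ud: "adj_mat U * \<rho> * U = dgc D (\<lambda>i. map complex_of_real lam ! i)"
    using spectral[OF rc hr cp] by blast
  have Uc: "U \<in> carrier_mat D D" and aU: "adj_mat U \<in> carrier_mat D D" using U unitary_def by auto
  have dg: "dgc D (\<lambda>i. map complex_of_real lam ! i) = dgc D (\<lambda>i. complex_of_real (l i))"
    by (rule dgc_cong) (simp add: len l_def)
  have rho: "\<rho> = U * dgc D (\<lambda>i. complex_of_real (l i)) * adj_mat U"
    using unitary_back[OF U rc Ud] dg by simp
  have l0: "0 \<le> l i" if i: "i < D" for i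
  proof -
    have "complex_of_real (l i) = (adj_mat U * \<rho> * U) $$ (i,i)" unfolding Ud dg using i by simp
    also have "\<dots> = (\<rho> *\<^sub>v col U i) \<bullet>c col U i" by (rule diag_conj_entry[OF rc Uc i])
    finally show ?thesis using psd_qf[OF _ col_carrier_n[OF Uc], of \<rho> i] dens unfolding density_op_def
      by (metis Re_complex_of_real)
  qed
  have sl: "(\<Sum>i<D. l i) = 1" using re_tr_fm[OF U, of l] trr unfolding rho by simp
  have D0: "D \<noteq> 0"
  proof
    assume "D = 0"
    then have "tr_mat \<rho> = 0" using rc unfolding tr_mat_def by simp
    then show False using trr by simp
  qed
  have "Min (set lam) \<in> set lam" using len D0 by (intro Min_in) auto
  then obtain j where j: "j < D" "lam ! j = Min (set lam)" using len by (auto simp: in_set_conv_nth)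
  have x0: "0 \<le> x" using x_ge j l0[of j] unfolding l_def by simp
  have mu0: "0 \<le> \<mu> i" for i using clip_facts(4)[OF xy, of "l i"] x0 unfolding \<mu>_def by simp
  have smu: "(\<Sum>i<D. \<mu> i) = 1"
  proof -
    have "(\<Sum>i<D. \<mu> i) = (\<Sum>i<D. l i + (pos_part (x - l i) - pos_part (l i - y)))"
      unfolding \<mu>_def using clip_facts(1)[OF xy] by (intro sum.cong refl) (metis add.commute diff_add_cancel)
    also have "\<dots> = 1" using sl x_def y_def unfolding l_def by (simp add: sum.distrib sum_subtractf)
    finally show ?thesis .
  qed
  define M where "M = U * dgc D (\<lambda>i. complex_of_real (\<mu> i)) * adj_mat U"
  have Mc: "M \<in> carrier_mat D D" unfolding M_def using Uc aU by (simp add: sq_mult[of _ D])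
  have densM: "density_op D M"
    unfolding density_op_def M_def using psd_fm[OF U, of \<mu>] mu0 tr_fm[OF U] smu
    by (simp add: of_real_sum[symmetric] del: of_real_sum)
  have diff: "\<rho> - M = U * dgc D (\<lambda>i. complex_of_real (l i - \<mu> i)) * adj_mat U"
    unfolding rho M_def fm_minus[OF U] by simp
  have "trace_dist \<rho> M = (\<Sum>i<D. \<bar>l i - \<mu> i\<bar>) / 2"
    unfolding trace_dist_def diff abs_fm[OF U] re_tr_fm[OF U] ..
  also have "(\<Sum>i<D. \<bar>l i - \<mu> i\<bar>) = 2 * \<epsilon>"
    unfolding \<mu>_def clip_facts(2)[OF xy] sum.distrib using x_def y_def unfolding l_def by simp
  finally have tdM: "trace_dist \<rho> M \<le> \<epsilon>" by simp
  have Mball: "M \<in> eps_ball D \<epsilon> \<rho>" unfolding eps_ball_def using densM tdM by simp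
  have MM: "Re (tr_mat (M * M)) = (\<Sum>i<D. (\<mu> i)\<^sup>2)"
    unfolding M_def fm_mult[OF U] of_real_mult[symmetric] re_tr_fm[OF U] by (simp add: power2_eq_square)
  have lb: "(\<Sum>i<D. (\<mu> i)\<^sup>2) \<le> Re (tr_mat (\<sigma> * \<sigma>))" if s: "\<sigma> \<in> eps_ball D \<epsilon> \<rho>" for \<sigma>
  proof -
    have sd: "density_op D \<sigma>" "trace_dist \<rho> \<sigma> \<le> \<epsilon>" using s unfolding eps_ball_def by auto
    have sx: "(\<Sum>i<D. pos_part (x - l i)) = \<epsilon>" and sy: "(\<Sum>i<D. pos_part (l i - y)) = \<epsilon>"
      using x_def y_def unfolding l_def by auto
    show ?thesis unfolding \<mu>_def by (rule lower_bound[OF U rho xy sx sy sd trr])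
  qed
  have inf: "Inf ((\<lambda>\<sigma>. Re (tr_mat (\<sigma> * \<sigma>))) ` eps_ball D \<epsilon> \<rho>) = (\<Sum>i<D. (\<mu> i)\<^sup>2)"
  proof (rule cInf_eq_minimum)
    show "(\<Sum>i<D. (\<mu> i)\<^sup>2) \<in> (\<lambda>\<sigma>. Re (tr_mat (\<sigma> * \<sigma>))) ` eps_ball D \<epsilon> \<rho>"
      by (rule image_eqI[where x=M]) (use MM Mball in simp_all)
    fix r assume "r \<in> (\<lambda>\<sigma>. Re (tr_mat (\<sigma> * \<sigma>))) ` eps_ball D \<epsilon> \<rho>"
    then obtain \<sigma> where s: "\<sigma> \<in> eps_ball D \<epsilon> \<rho>" and r: "r = Re (tr_mat (\<sigma> * \<sigma>))" by (rule imageE)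
    show "(\<Sum>i<D. (\<mu> i)\<^sup>2) \<le> r" unfolding r by (rule lb[OF s])
  qed
  show ?thesis unfolding smooth_renyi2_def inf unfolding \<mu>_def l_def by simp
qed

end
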